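(* Work in $\ell_1$ over $\mathbb{C}$ with sequences indexed by $\{0,1,2,\dots\}$ and standard basis $(e_k)$. Let $\xi$ be uniform on $\{-1,1\}$, and let $A$ be the diagonal operator $Ae_0=0$, $Ae_k=i\xi k\,e_k$ for $k\ge1$, so $e^{At}e_k=e^{i\xi kt}e_k$ and $\mathbb{E}e^{At}e_k=\cos(kt)e_k$. Let $\xi_1,\xi_2,\dots$ be i.i.d. copies of $\xi$ and $A_i$ defined as $A$ with $\xi_i$ in place of $\xi$. Then for every $T>0$ and every $n$ large enough (for every outcome $\omega$), $$\sup_{t\in[0,T]}\Big\|e^{A_1t/n}\cdots e^{A_nt/n}-\big(\mathbb{E}e^{At/n}\big)^n\Big\|_{\mathcal{L}(\ell_1)}\ge1;$$ in particular the law of large numbers fails in the operator norm topology for this sequence.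
   Context: $(\Omega,\mathcal{F},\Pr)$ is a probability space; $e^{Bt}=\sum_k t^kB^k/k!$ for bounded $B$ and, for diagonal $B$ with unbounded entries as here, $e^{Bt}$ is the diagonal operator with entries $e^{b_{kk}t}$; $\mathbb{E}$ of a random operator is the Pettis integral (entrywise expectation). *)

theory Defs
  imports "HOL-Probability.Probability"
begin

type_synonym seq = "nat \<Rightarrow> complex"
type_synonym op = "seq \<Rightarrow> seq"

definition l1norm :: "seq \<Rightarrow> real" where
  "l1norm x = (\<Sum>k. norm (x k))"

definition in_l1 :: "seq \<Rightarrow> bool" where
  "in_l1 x \<longleftrightarrow> summable (\<lambda>k. norm (x k))"

definition opnorm_l1 :: "op \<Rightarrow> real" where
  "opnorm_l1 B = Sup {l1norm (B x) | x. in_l1 x \<and> l1norm x \<le> 1}"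

definition basis :: "nat \<Rightarrow> seq" where
  "basis k = (\<lambda>j. if j = k then 1 else 0)"

text \<open>e^{Bt} for a diagonal B with diagonal entries b k.\<close>
definition expdiag :: "(nat \<Rightarrow> complex) \<Rightarrow> real \<Rightarrow> op" where
  "expdiag b t = (\<lambda>x k. exp (b k * complex_of_real t) * x k)"

definition Adiag :: "real \<Rightarrow> nat \<Rightarrow> complex" where
  "Adiag s k = (if k = 0 then 0 else \<i> * complex_of_real s * of_nat k)"

text \<open>Expectation of a random operator (entrywise, i.e. Pettis integral):
  the operator whose matrix entries are the expectations of the matrix entries.\<close>
definition expect_op :: "'a measure \<Rightarrow> ('a \<Rightarrow> op) \<Rightarrow> op" where
  "expect_op M B = (\<lambda>x j. \<Sum>k. (\<integral>\<omega>. B \<omega> (basis k) j \<partial>M) * x k)"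

fun prod_ops :: "(nat \<Rightarrow> op) \<Rightarrow> nat \<Rightarrow> op" where
  "prod_ops F 0 = id"
| "prod_ops F (Suc n) = prod_ops F n \<circ> F (Suc n)"

end

theory Submission
  imports Defs
begin

lemma norm_exp_Adiag: "norm (exp (Adiag s k * complex_of_real t)) = 1"
  by (simp add: Adiag_def norm_exp_eq_Re)

lemma prod_ops_diag:
  "prod_ops (\<lambda>i. expdiag (b i) s) n x k = (\<Prod>i\<in>{1..n}. exp (b i k * complex_of_real s)) * x k"
proof (induction n arbitrary: x)
  case 0 then show ?case by simp
next
  case (Suc n)
  have "prod_ops (\<lambda>i. expdiag (b i) s) (Suc n) x k
      = prod_ops (\<lambda>i. expdiag (b i) s) n (expdiag (b (Suc n)) s x) k" by simp
  also have "\<dots> = (\<Prod>i\<in>{1..n}. exp (b i k * complex_of_real s)) * (exp (b (Suc n) k * complex_of_real s) * x k)"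
    using Suc by (simp add: expdiag_def)
  also have "\<dots> = (\<Prod>i\<in>{1..Suc n}. exp (b i k * complex_of_real s)) * x k"
    by (simp add: prod.nat_ivl_Suc' mult.assoc)
  finally show ?case .
qed

lemma expect_diag:
  "expect_op M (\<lambda>\<omega>. expdiag (b \<omega>) s) = (\<lambda>x j. (\<integral>\<omega>. exp (b \<omega> j * complex_of_real s) \<partial>M) * x j)"
proof (intro ext)
  fix x j
  have "expect_op M (\<lambda>\<omega>. expdiag (b \<omega>) s) x j
      = (\<Sum>k. (if k = j then (\<integral>\<omega>. exp (b \<omega> j * complex_of_real s) \<partial>M) * x k else 0))"
    unfolding expect_op_def expdiag_def basis_def
    by (intro suminf_cong) auto
  also have "\<dots> = (\<integral>\<omega>. exp (b \<omega> j * complex_of_real s) \<partial>M) * x j"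
    using sums_single[of j "\<lambda>k. (\<integral>\<omega>. exp (b \<omega> j * complex_of_real s) \<partial>M) * x k"]
    by (simp add: sums_iff)
  finally show "expect_op M (\<lambda>\<omega>. expdiag (b \<omega>) s) x j = (\<integral>\<omega>. exp (b \<omega> j * complex_of_real s) \<partial>M) * x j" .
qed

lemma funpow_diag: "(((\<lambda>x j. c j * x j) :: op) ^^ n) x j = c j ^ n * x j"
  by (induction n arbitrary: x) (auto simp: mult.assoc)

lemma in_l1_basis: "in_l1 (basis j)" and l1norm_basis: "l1norm (basis j) = 1"
proof -
  have e: "(\<lambda>k. norm (basis j k)) = (\<lambda>k. if k = j then 1 else 0)"
    by (auto simp: basis_def)
  have "(\<lambda>k. norm (basis j k)) sums 1"
    unfolding e using sums_single[of j "\<lambda>_. 1::real"] by simp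
  then show "in_l1 (basis j)" "l1norm (basis j) = 1"
    by (auto simp: in_l1_def l1norm_def sums_iff)
qed

lemma diag_opnorm:
  fixes d :: "nat \<Rightarrow> complex"
  assumes B: "\<And>k. norm (d k) \<le> B"
  shows "norm (d j) \<le> opnorm_l1 (\<lambda>x k. d k * x k)"
    and "opnorm_l1 (\<lambda>x k. d k * x k) \<le> B"
proof -
  let ?S = "{l1norm ((\<lambda>x k. d k * x k) x) | x. in_l1 x \<and> l1norm x \<le> 1}"
  have B0: "0 \<le> B" using B[of 0] norm_ge_zero[of "d 0"] by linarith
  have bd: "l1norm (\<lambda>k. d k * x k) \<le> B" if "in_l1 x" "l1norm x \<le> 1" for x
  proof -
    have s: "summable (\<lambda>k. norm (x k))" using that by (simp add: in_l1_def)
    have s2: "summable (\<lambda>k. B * norm (x k))" using s by (rule summable_mult)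
    have le: "norm (d k * x k) \<le> B * norm (x k)" for k
      by (simp add: norm_mult mult_right_mono B)
    have s3: "summable (\<lambda>k. norm (d k * x k))"
      by (rule summable_comparison_test[OF _ s2]) (use le in auto)
    have "l1norm (\<lambda>k. d k * x k) \<le> (\<Sum>k. B * norm (x k))"
      unfolding l1norm_def by (rule suminf_le[OF le s3 s2])
    also have "\<dots> = B * l1norm x" unfolding l1norm_def using suminf_mult[OF s] by simp
    also have "\<dots> \<le> B" using that(2) B0 by (simp add: mult_left_le)
    finally show ?thesis .
  qed
  have bdd: "bdd_above ?S" unfolding bdd_above_def using bd by blast
  have db: "(\<lambda>k. d k * basis j k) = (\<lambda>k. if k = j then d j else 0)"
    by (auto simp: basis_def)
  have "(\<lambda>k. norm (if k = j then d j else 0)) = (\<lambda>k. if k = j then norm (d j) else 0)"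
    by auto
  then have "l1norm (\<lambda>k. d k * basis j k) = norm (d j)"
    unfolding l1norm_def db using sums_single[of j "\<lambda>_. norm (d j)"] by (simp add: sums_iff)
  moreover have mem: "l1norm (\<lambda>k. d k * basis j k) \<in> ?S"
  proof -
    have "in_l1 (basis j) \<and> l1norm (basis j) \<le> 1" using in_l1_basis l1norm_basis by simp
    then show ?thesis by blast
  qed
  ultimately show "norm (d j) \<le> opnorm_l1 (\<lambda>x k. d k * x k)"
    unfolding opnorm_l1_def using cSup_upper[OF mem bdd] by simp
  have ne: "?S \<noteq> {}" using mem by blast
  show "opnorm_l1 (\<lambda>x k. d k * x k) \<le> B"
    unfolding opnorm_l1_def by (rule cSup_least[OF ne]) (use bd in auto)
qed


theorem mainTheorem10:
  fixes M :: "'a measure" and \<xi> :: "'a \<Rightarrow> real" and \<xi>s :: "nat \<Rightarrow> 'a \<Rightarrow> real"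
  assumes "prob_space M"
    and "\<xi> \<in> borel_measurable M"
    and "\<forall>\<omega>\<in>space M. \<xi> \<omega> \<in> {-1, 1}"
    and "measure M {\<omega> \<in> space M. \<xi> \<omega> = 1} = 1/2"
    and "\<forall>i\<ge>1. \<xi>s i \<in> borel_measurable M"
    and "\<forall>i\<ge>1. \<forall>\<omega>\<in>space M. \<xi>s i \<omega> \<in> {-1, 1}"
    and "\<forall>i\<ge>1. measure M {\<omega> \<in> space M. \<xi>s i \<omega> = 1} = 1/2"
    and "prob_space.indep_vars M (\<lambda>_. borel) \<xi>s {1..}"
    and "T > 0"
  shows "\<exists>N. \<forall>n\<ge>N. \<forall>\<omega>\<in>space M.
           Sup ((\<lambda>t. opnorm_l1 (\<lambda>x. prod_ops (\<lambda>i. expdiag (Adiag (\<xi>s i \<omega>)) (t / real n)) n x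
                  - ((expect_op M (\<lambda>\<omega>'. expdiag (Adiag (\<xi> \<omega>')) (t / real n))) ^^ n) x)) ` {0..T})
           \<ge> 1"
  proof -
  interpret P: prob_space M by fact
  have [measurable]: "\<xi> \<in> borel_measurable M" by fact
  define A where "A = {\<omega> \<in> space M. \<xi> \<omega> = 1}"
  have Am: "A \<in> sets M" unfolding A_def by measurable
  have xi_eq: "\<xi> \<omega> = 2 * indicator A \<omega> - 1" if "\<omega> \<in> space M" for \<omega>
    using assms(3) that by (auto simp: A_def indicator_def)
  have intxi: "(\<integral>\<omega>. \<xi> \<omega> \<partial>M) = 0"
  proof -
    have "(\<integral>\<omega>. \<xi> \<omega> \<partial>M) = (\<integral>\<omega>. 2 * indicator A \<omega> - 1 \<partial>M)"
      by (rule Bochner_Integration.integral_cong) (auto simp: xi_eq)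
    also have "\<dots> = 2 * (\<integral>\<omega>. indicator A \<omega> \<partial>M) - (\<integral>\<omega>. 1 \<partial>M)"
    proof -
      have i1: "integrable M (indicat_real A)"
        using Am by (intro integrable_real_indicator) (auto simp: P.emeasure_space_1 less_top[symmetric])
      have "(\<integral>\<omega>. 2 * indicator A \<omega> - 1 \<partial>M) = (\<integral>\<omega>. 2 * indicat_real A \<omega> \<partial>M) - (\<integral>\<omega>. 1 \<partial>M)"
        by (rule Bochner_Integration.integral_diff) (use i1 in auto)
      then show ?thesis by simp
    qed
    also have "\<dots> = 0"
      using Am assms(4) by (simp add: A_def P.prob_space Int_absorb2 sets.sets_into_space)
    finally show ?thesis .
  qed
  define m :: nat where "m = nat \<lceil>pi / (2 * T)\<rceil> + 1"
  define t0 where "t0 = pi / (2 * real m)"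
  have m1: "m \<ge> 1" by (simp add: m_def)
  have "pi / (2 * T) \<le> real m"
    unfolding m_def by linarith
  then have "pi \<le> T * (2 * real m)" using assms(9) by (simp add: field_simps)
  then have t0T: "t0 \<in> {0..T}" using m1 unfolding t0_def by (auto simp: field_simps)
  show ?thesis
  proof (intro exI[of _ 1] allI impI ballI)
    fix n :: nat and \<omega> assume n: "1 \<le> n" and \<omega>: "\<omega> \<in> space M"
    define c where "c t k = (\<integral>\<omega>'. exp (Adiag (\<xi> \<omega>') k * complex_of_real (t / real n)) \<partial>M)" for t k
    define Pr where "Pr t k = (\<Prod>i\<in>{1..n}. exp (Adiag (\<xi>s i \<omega>) k * complex_of_real (t / real n)))" for t k
    define d where "d t k = Pr t k - c t k ^ n" for t k
    have opeq: "(\<lambda>x. prod_ops (\<lambda>i. expdiag (Adiag (\<xi>s i \<omega>)) (t / real n)) n x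
                  - ((expect_op M (\<lambda>\<omega>'. expdiag (Adiag (\<xi> \<omega>')) (t / real n))) ^^ n) x)
          = (\<lambda>x k. d t k * x k)" for t
      unfolding expect_diag
      by (intro ext) (simp only: prod_ops_diag funpow_diag d_def Pr_def c_def fun_diff_def left_diff_distrib)
    have Pr1: "norm (Pr t k) = 1" for t k
      unfolding Pr_def prod_norm[symmetric] norm_exp_Adiag by simp
    have c1: "norm (c t k) \<le> 1" for t k
    proof -
      have "norm (c t k) \<le> (\<integral>\<omega>'. norm (exp (Adiag (\<xi> \<omega>') k * complex_of_real (t / real n))) \<partial>M)"
        unfolding c_def by (rule integral_norm_bound)
      also have "\<dots> = 1" unfolding norm_exp_Adiag by (simp add: P.prob_space)
      finally show ?thesis .
    qed
    have dB: "norm (d t k) \<le> 2" for t k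
    proof -
      have "norm (d t k) \<le> norm (Pr t k) + norm (c t k ^ n)"
        unfolding d_def by (rule norm_triangle_ineq4)
      also have "norm (c t k ^ n) \<le> 1"
        by (simp add: norm_power power_le_one c1)
      finally show ?thesis using Pr1 by simp
    qed
    define f where "f t = opnorm_l1 (\<lambda>x. prod_ops (\<lambda>i. expdiag (Adiag (\<xi>s i \<omega>)) (t / real n)) n x
                  - ((expect_op M (\<lambda>\<omega>'. expdiag (Adiag (\<xi> \<omega>')) (t / real n))) ^^ n) x)" for t
    have f2: "f t \<le> 2" for t
      unfolding f_def opeq using diag_opnorm(2)[of "d t" 2] dB by simp
    have bdd: "bdd_above (f ` {0..T})" using f2 by (auto simp: bdd_above_def)
    define j where "j = n * m"
    have j0: "j \<noteq> 0" using n m1 by (simp add: j_def)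
    have js: "real j * (t0 / real n) = pi / 2"
      using n m1 by (simp add: j_def t0_def field_simps)
    have cj: "c t0 j = 0"
    proof -
      have "c t0 j = (\<integral>\<omega>'. \<i> * complex_of_real (\<xi> \<omega>') \<partial>M)"
        unfolding c_def
      proof (rule Bochner_Integration.integral_cong[OF refl])
        fix \<omega>' assume "\<omega>' \<in> space M"
        then have "\<xi> \<omega>' \<in> {-1, 1}" using assms(3) by auto
        have "Adiag (\<xi> \<omega>') j * complex_of_real (t0 / real n)
            = \<i> * complex_of_real (\<xi> \<omega>' * (real j * (t0 / real n)))"
          using j0 by (simp add: Adiag_def)
        also have "\<dots> = \<i> * complex_of_real (\<xi> \<omega>' * (pi / 2))" by (simp only: js)
        finally have "exp (Adiag (\<xi> \<omega>') j * complex_of_real (t0 / real n))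
             = cis (\<xi> \<omega>' * (pi / 2))" unfolding cis_conv_exp by (rule arg_cong[where f=exp])
        then show "exp (Adiag (\<xi> \<omega>') j * complex_of_real (t0 / real n)) = \<i> * complex_of_real (\<xi> \<omega>')"
          using \<open>\<xi> \<omega>' \<in> {-1, 1}\<close> by (auto simp: cis_pi_half)
      qed
      also have "\<dots> = \<i> * (\<integral>\<omega>'. complex_of_real (\<xi> \<omega>') \<partial>M)"
        by (rule integral_mult_right_zero)
      also have "\<dots> = 0" by (simp add: integral_complex_of_real intxi)
      finally show ?thesis .
    qed
    have "norm (d t0 j) = 1"
    proof -
      have z: "(0::complex) ^ n = 0" using n by (simp add: power_0_left)
      show ?thesis unfolding d_def cj z using Pr1 by simp
    qed
    then have "1 \<le> f t0"
      unfolding f_def opeq using diag_opnorm(1)[of "d t0" 2 j] dB by simp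
    also have "f t0 \<le> Sup (f ` {0..T})"
      by (rule cSup_upper[OF _ bdd]) (use t0T in auto)
    finally show "1 \<le> Sup (f ` {0..T})" .
  qed
qed

end
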